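(* Let $\lambda$ be a partition of $n$. The number of connected components of the graph $\mathcal A_\lambda$ is at most $d_\lambda$.
   Context: Fix $n\ge1$; $\overline i=i+n\mathbb Z$, $[\overline n]=\{\overline1,\dots,\overline n\}$. A tabloid of shape $\lambda$ is a sequence $(T_1,\dots,T_{\ell(\lambda)})$ of pairwise disjoint subsets of $[\overline n]$ with $|T_r|=\lambda_r$ and union $[\overline n]$ (row 1 highest). $\tau(T)=\{\overline i:\overline i\text{ lies in a strictly higher row than }\overline{i+1}\}$. $T,T'$ are connected by a Knuth move if $T'$ is obtained from $T$ by exchanging $\overline i$ and $\overline{i+1}$ for some $i$ and neither of $\tau(T),\tau(T')$ contains the other. $\mathcal A_\lambda$ is the graph on tabloids of shape $\lambda$ whose edges are Knuth moves. $d_\lambda=\gcd(\lambda'_1,\lambda'_2,\dots)$ with $\lambda'$ the conjugate partition. *)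

theory Defs
  imports Main
begin

text \<open>Residues mod n are represented by 0,...,n-1; the successor of i is (i+1) mod n.
  Partitions are weakly decreasing lists of positive naturals; rows are 0-indexed,
  row 0 being the highest.\<close>

definition is_partition :: "nat list \<Rightarrow> nat \<Rightarrow> bool" where
  "is_partition lam n \<longleftrightarrow> sorted_wrt (\<ge>) lam \<and> 0 \<notin> set lam \<and> sum_list lam = n"

definition res_succ :: "nat \<Rightarrow> nat \<Rightarrow> nat" where
  "res_succ n i = (i + 1) mod n"

definition tabloids :: "nat \<Rightarrow> nat list \<Rightarrow> nat set list set" where
  "tabloids n lam = {T. length T = length lam
      \<and> (\<forall>r < length lam. card (T ! r) = lam ! r)
      \<and> (\<forall>r < length lam. \<forall>s < length lam. r \<noteq> s \<longrightarrow> T ! r \<inter> T ! s = {})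
      \<and> \<Union> (set T) = {0..<n}}"

definition strictly_higher :: "nat set list \<Rightarrow> nat \<Rightarrow> nat \<Rightarrow> bool" where
  "strictly_higher T a b \<longleftrightarrow> (\<exists>r s. r < s \<and> s < length T \<and> a \<in> T ! r \<and> b \<in> T ! s)"

definition tau :: "nat \<Rightarrow> nat set list \<Rightarrow> nat set" where
  "tau n T = {i \<in> {0..<n}. strictly_higher T i (res_succ n i)}"

definition swap_el :: "nat \<Rightarrow> nat \<Rightarrow> nat \<Rightarrow> nat" where
  "swap_el a b x = (if x = a then b else if x = b then a else x)"

definition exchange :: "nat \<Rightarrow> nat \<Rightarrow> nat set list \<Rightarrow> nat set list" where
  "exchange n i T = map (\<lambda>A. swap_el i (res_succ n i) ` A) T"

definition knuth_move :: "nat \<Rightarrow> nat set list \<Rightarrow> nat set list \<Rightarrow> bool" where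
  "knuth_move n T T' \<longleftrightarrow> (\<exists>i \<in> {0..<n}. T' = exchange n i T
      \<and> \<not> tau n T \<subseteq> tau n T' \<and> \<not> tau n T' \<subseteq> tau n T)"

definition knuth_edges :: "nat \<Rightarrow> nat list \<Rightarrow> (nat set list \<times> nat set list) set" where
  "knuth_edges n lam = {(T, T'). T \<in> tabloids n lam \<and> T' \<in> tabloids n lam
      \<and> (knuth_move n T T' \<or> knuth_move n T' T)}"

definition num_components :: "nat \<Rightarrow> nat list \<Rightarrow> nat" where
  "num_components n lam = card (tabloids n lam // ((knuth_edges n lam)\<^sup>*))"

text \<open>Conjugate partition: lam'_j = number of parts \<ge> j (j \<ge> 1).\<close>
definition conj_part :: "nat list \<Rightarrow> nat \<Rightarrow> nat" where
  "conj_part lam j = length (filter (\<lambda>x. j \<le> x) lam)"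

definition d_lam :: "nat list \<Rightarrow> nat" where
  "d_lam lam = Gcd (conj_part lam ` {1..sum_list lam})"

end

theory Submission
  imports Defs "HOL-Library.Multiset"
begin

definition lmove :: "nat list \<Rightarrow> nat list \<Rightarrow> bool" where
"lmove u v \<longleftrightarrow>
  (\<exists>p q a b c. u = p @ [a,b,c] @ q \<and> v = p @ [a,c,b] @ q \<and> min b c \<le> a \<and> a < max b c) \<or>
  (\<exists>p q b c d. u = p @ [b,c,d] @ q \<and> v = p @ [c,b,d] @ q \<and> min b c < d \<and> d \<le> max b c)"

lemma mset_rot[simp]: "mset (rotate n xs) = mset xs"
  by (metis append_take_drop_id mset_append rotate_drop_take union_commute)

abbreviation lequiv where "lequiv \<equiv> lmove\<^sup>*\<^sup>*"

definition cmove :: "nat list \<Rightarrow> nat list \<Rightarrow> bool" where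
"cmove u v \<longleftrightarrow> (\<exists>k. lmove (rotate k u) (rotate k v))"

abbreviation ceq where "ceq \<equiv> cmove\<^sup>*\<^sup>*"

lemma lmove_sym: "lmove u v \<Longrightarrow> lmove v u"
  unfolding lmove_def
proof (elim disjE exE conjE)
  fix p q a b c assume "u = p @ [a,b,c] @ q" "v = p @ [a,c,b] @ q" "min b c \<le> a" "a < max b c"
  then show "(\<exists>p q a b c. v = p @ [a,b,c] @ q \<and> u = p @ [a,c,b] @ q \<and> min b c \<le> a \<and> a < max b c) \<or>
    (\<exists>p q b c d. v = p @ [b,c,d] @ q \<and> u = p @ [c,b,d] @ q \<and> min b c < d \<and> d \<le> max b c)"
    by (intro disjI1 exI[of _ p] exI[of _ q] exI[of _ a] exI[of _ c] exI[of _ b]) (simp add: min.commute max.commute)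
next
  fix p q b c d assume "u = p @ [b,c,d] @ q" "v = p @ [c,b,d] @ q" "min b c < d" "d \<le> max b c"
  then show "(\<exists>p q a b c. v = p @ [a,b,c] @ q \<and> u = p @ [a,c,b] @ q \<and> min b c \<le> a \<and> a < max b c) \<or>
    (\<exists>p q b c d. v = p @ [b,c,d] @ q \<and> u = p @ [c,b,d] @ q \<and> min b c < d \<and> d \<le> max b c)"
    by (intro disjI2 exI[of _ p] exI[of _ q] exI[of _ c] exI[of _ b] exI[of _ d]) (simp add: min.commute max.commute)
qed

lemma lmove_length: "lmove u v \<Longrightarrow> length v = length u"
  unfolding lmove_def by auto

lemma lmove_length3: "lmove u v \<Longrightarrow> 3 \<le> length u"
  unfolding lmove_def by auto

lemma lmove_mset: "lmove u v \<Longrightarrow> mset v = mset u"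
  unfolding lmove_def by (auto simp: add_mset_commute)

lemma lmove_ctx: "lmove u v \<Longrightarrow> lmove (x @ u @ y) (x @ v @ y)"
  unfolding lmove_def
proof (elim disjE exE conjE)
  fix p q a b c assume "u = p @ [a,b,c] @ q" "v = p @ [a,c,b] @ q" "min b c \<le> a" "a < max b c"
  then show "(\<exists>p q a b c. x @ u @ y = p @ [a,b,c] @ q \<and> x @ v @ y = p @ [a,c,b] @ q \<and> min b c \<le> a \<and> a < max b c) \<or>
    (\<exists>p q b c d. x @ u @ y = p @ [b,c,d] @ q \<and> x @ v @ y = p @ [c,b,d] @ q \<and> min b c < d \<and> d \<le> max b c)"
    by (intro disjI1 exI[of _ "x@p"] exI[of _ "q@y"] exI[of _ a] exI[of _ b] exI[of _ c]) simp
next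
  fix p q b c d assume "u = p @ [b,c,d] @ q" "v = p @ [c,b,d] @ q" "min b c < d" "d \<le> max b c"
  then show "(\<exists>p q a b c. x @ u @ y = p @ [a,b,c] @ q \<and> x @ v @ y = p @ [a,c,b] @ q \<and> min b c \<le> a \<and> a < max b c) \<or>
    (\<exists>p q b c d. x @ u @ y = p @ [b,c,d] @ q \<and> x @ v @ y = p @ [c,b,d] @ q \<and> min b c < d \<and> d \<le> max b c)"
    by (intro disjI2 exI[of _ "x@p"] exI[of _ "q@y"] exI[of _ b] exI[of _ c] exI[of _ d]) simp
qed

lemma lequiv_sym: "lequiv u v \<Longrightarrow> lequiv v u"
  by (induction rule: rtranclp_induct) (auto intro: lmove_sym converse_rtranclp_into_rtranclp)

lemma lequiv_ctx: "lequiv u v \<Longrightarrow> lequiv (x @ u @ y) (x @ v @ y)"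
  by (induction rule: rtranclp_induct) (auto intro: lmove_ctx rtranclp.rtrancl_into_rtrancl)

lemma lequiv_appR: "lequiv u v \<Longrightarrow> lequiv (u @ y) (v @ y)"
  using lequiv_ctx[of u v "[]" y] by simp

lemma lequiv_appL: "lequiv u v \<Longrightarrow> lequiv (x @ u) (x @ v)"
  using lequiv_ctx[of u v x "[]"] by simp

lemma lequiv_mset: "lequiv u v \<Longrightarrow> mset v = mset u"
  by (induction rule: rtranclp_induct) (auto dest: lmove_mset)

lemma lmove_cmove: "lmove u v \<Longrightarrow> cmove u v"
  unfolding cmove_def by (rule exI[of _ 0]) simp

lemma cmove_sym: "cmove u v \<Longrightarrow> cmove v u"
  unfolding cmove_def using lmove_sym by blast

lemma cmove_length: "cmove u v \<Longrightarrow> length v = length u"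
  unfolding cmove_def using lmove_length by fastforce

lemma cmove_mset: "cmove u v \<Longrightarrow> mset v = mset u"
  unfolding cmove_def using lmove_mset by (metis mset_rot)

lemma cmove_rotate: "cmove u v \<Longrightarrow> cmove (rotate j u) (rotate j v)"
proof -
  assume "cmove u v"
  then obtain k where k: "lmove (rotate k u) (rotate k v)" unfolding cmove_def by blast
  have lv: "length v = length u" using k lmove_length by fastforce
  define L where "L = length u"
  have "L \<ge> 3" using lmove_length3[OF k] L_def by simp
  define k' where "k' = k + L * j - j"
  have e: "k' + j = k + L * j" unfolding k'_def using \<open>L \<ge> 3\<close> using le_add_diff_inverse2[of j "k + L*j"] by (simp add: trans_le_add2)
  have "rotate k' (rotate j u) = rotate k u"
    by (simp add: rotate_rotate e) (metis L_def mod_mult_self2 rotate_conv_mod)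
  moreover have "rotate k' (rotate j v) = rotate k v"
    by (simp add: rotate_rotate e) (metis L_def lv mod_mult_self2 rotate_conv_mod)
  ultimately show ?thesis unfolding cmove_def using k by metis
qed

lemma ceq_sym: "ceq u v \<Longrightarrow> ceq v u"
  by (induction rule: rtranclp_induct) (auto intro: cmove_sym converse_rtranclp_into_rtranclp)

lemma ceq_trans: "ceq u v \<Longrightarrow> ceq v w \<Longrightarrow> ceq u w"
  by (rule rtranclp_trans)

lemma ceq_rotate: "ceq u v \<Longrightarrow> ceq (rotate j u) (rotate j v)"
  by (induction rule: rtranclp_induct) (auto intro: cmove_rotate rtranclp.rtrancl_into_rtrancl)

lemma ceq_mset: "ceq u v \<Longrightarrow> mset v = mset u"
  by (induction rule: rtranclp_induct) (auto dest: cmove_mset)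

lemma ceq_length: "ceq u v \<Longrightarrow> length v = length u"
  by (induction rule: rtranclp_induct) (auto dest: cmove_length)

lemma lequiv_ceq: "lequiv u v \<Longrightarrow> ceq u v"
  by (induction rule: rtranclp_induct) (auto intro: lmove_cmove rtranclp.rtrancl_into_rtrancl)

lemma lequiv_ceq_ctx: "lequiv u v \<Longrightarrow> ceq (x @ u @ y) (x @ v @ y)"
  using lequiv_ceq lequiv_ctx by blast


lemma col_step: "x < l \<Longrightarrow> i \<le> l \<Longrightarrow> lequiv ([0..<i] @ [x] @ [i..<l]) ([0..<l] @ [x])"
proof (induction "l - i" arbitrary: i)
  case 0
  then show ?case by simp
next
  case (Suc m)
  then have il: "i < l" by simp
  have ups: "[i..<l] = i # [Suc i..<l]" using il upt_conv_Cons by blast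
  have IH: "lequiv ([0..<Suc i] @ [x] @ [Suc i..<l]) ([0..<l] @ [x])"
    using Suc.hyps(1)[of "Suc i"] Suc.hyps(2) Suc.prems il by simp
  consider "x = i" | "i < x" | "x < i" by linarith
  then show ?case
  proof cases
    case 1
    then show ?thesis using IH ups by simp
  next
    case 2
    have sl: "Suc i < l" using 2 Suc.prems by simp
    have u2: "[Suc i..<l] = Suc i # [Suc (Suc i)..<l]" using sl upt_conv_Cons by blast
    have "lmove ([0..<i] @ [x, i, Suc i] @ [Suc (Suc i)..<l]) ([0..<i] @ [i, x, Suc i] @ [Suc (Suc i)..<l])"
      unfolding lmove_def using 2
      by (intro disjI2 exI[of _ "[0..<i]"] exI[of _ "[Suc (Suc i)..<l]"] exI[of _ x] exI[of _ i] exI[of _ "Suc i"]) simp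
    then have "lmove ([0..<i] @ [x] @ [i..<l]) ([0..<Suc i] @ [x] @ [Suc i..<l])"
      using ups u2 by simp
    then show ?thesis using IH by (meson converse_rtranclp_into_rtranclp)
  next
    case 3
    then obtain j where j: "i = Suc j" by (cases i) auto
    have "lmove ([0..<j] @ [j, x, i] @ [Suc i..<l]) ([0..<j] @ [j, i, x] @ [Suc i..<l])"
      unfolding lmove_def using 3 j
      by (intro disjI1 exI[of _ "[0..<j]"] exI[of _ "[Suc i..<l]"] exI[of _ j] exI[of _ x] exI[of _ i]) simp
    then have "lmove ([0..<i] @ [x] @ [i..<l]) ([0..<Suc i] @ [x] @ [Suc i..<l])"
      using ups j by simp
    then show ?thesis using IH by (meson converse_rtranclp_into_rtranclp)
  qed
qed

lemma col_central: "x < l \<Longrightarrow> lequiv ([x] @ [0..<l]) ([0..<l] @ [x])"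
  using col_step[of x l 0] by simp

lemma col_central_list: "set u \<subseteq> {..<l} \<Longrightarrow> lequiv ([0..<l] @ u) (u @ [0..<l])"
proof (induction u)
  case Nil
  then show ?case by simp
next
  case (Cons x u)
  have "lequiv ([0..<l] @ [x] @ u) ([x] @ [0..<l] @ u)"
    using lequiv_ctx[OF lequiv_sym[OF col_central[of x l]], of "[]" u] Cons.prems by simp
  moreover have "lequiv ([x] @ [0..<l] @ u) ([x] @ u @ [0..<l])"
    using lequiv_ctx[OF Cons.IH, of "[x]" "[]"] Cons.prems by simp
  ultimately show ?case by simp
qed

lemma bump_S1: "sorted_wrt (\<ge>) (y # Q) \<Longrightarrow> y < x \<Longrightarrow> lequiv ([y] @ Q @ [x]) ([y, x] @ Q)"
proof (induction Q rule: rev_induct)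
  case Nil
  then show ?case by simp
next
  case (snoc q Q')
  define a where "a = last (y # Q')"
  have bl: "y # Q' = butlast (y # Q') @ [a]" unfolding a_def by simp
  have aq: "q \<le> a" using snoc.prems(1) unfolding a_def
    by (simp add: sorted_wrt_append)
  have ay: "a \<le> y" using snoc.prems(1) unfolding a_def
    by (simp add: sorted_wrt_append)
  have qx: "q < x" using aq ay snoc.prems(2) by simp
  have "lmove (butlast (y # Q') @ [a, q, x] @ []) (butlast (y # Q') @ [a, x, q] @ [])"
    unfolding lmove_def using aq ay qx snoc.prems(2)
    by (intro disjI1 exI[of _ "butlast (y # Q')"] exI[of _ "[]"] exI[of _ a] exI[of _ q] exI[of _ x]) simp
  then have m: "lmove ([y] @ (Q' @ [q]) @ [x]) ([y] @ Q' @ [x] @ [q])"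
    using bl by (metis append.assoc append_Cons append_Nil)
  have "lequiv ([y] @ Q' @ [x]) ([y, x] @ Q')"
    using snoc.IH snoc.prems by (simp add: sorted_wrt_append)
  then have "lequiv (([y] @ Q' @ [x]) @ [q]) (([y, x] @ Q') @ [q])"
    by (rule lequiv_appR)
  then show ?case using m by (simp add: converse_rtranclp_into_rtranclp)
qed

lemma bump_S2: "sorted_wrt (\<ge>) (A @ [z]) \<Longrightarrow> y < z \<Longrightarrow> lequiv (A @ [y, z]) ([y] @ A @ [z])"
proof (induction A arbitrary: z rule: rev_induct)
  case Nil
  then show ?case by simp
next
  case (snoc a A')
  have za: "z \<le> a" using snoc.prems(1) by (simp add: sorted_wrt_append)
  have "lmove (A' @ [a, y, z] @ []) (A' @ [y, a, z] @ [])"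
    unfolding lmove_def using za snoc.prems(2)
    by (intro disjI2 exI[of _ A'] exI[of _ "[]"] exI[of _ a] exI[of _ y] exI[of _ z]) simp
  then have m: "lmove ((A' @ [a]) @ [y, z]) (A' @ [y, a] @ [z])" by simp
  have "lequiv (A' @ [y, a]) ([y] @ A' @ [a])"
    using snoc.IH[of a] snoc.prems za by (simp add: sorted_wrt_append)
  then have "lequiv ((A' @ [y, a]) @ [z]) (([y] @ A' @ [a]) @ [z])"
    by (rule lequiv_appR)
  then have "lequiv (A' @ [y] @ [a] @ [z]) ([y] @ A' @ [a] @ [z])" by simp
  then show ?case using m by (simp add: converse_rtranclp_into_rtranclp)
qed

lemma bump: "sorted_wrt (\<ge>) (A @ [y] @ Q) \<Longrightarrow> \<forall>a\<in>set A. x \<le> a \<Longrightarrow> y < x \<Longrightarrow>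
   lequiv (A @ [y] @ Q @ [x]) ([y] @ A @ [x] @ Q)"
proof -
  assume s: "sorted_wrt (\<ge>) (A @ [y] @ Q)" and ax: "\<forall>a\<in>set A. x \<le> a" and yx: "y < x"
  have "lequiv ([y] @ Q @ [x]) ([y, x] @ Q)"
    using bump_S1[of y Q x] s yx by (simp add: sorted_wrt_append)
  then have 1: "lequiv (A @ ([y] @ Q @ [x]) @ []) (A @ ([y, x] @ Q) @ [])" by (rule lequiv_ctx)
  have "sorted_wrt (\<ge>) (A @ [x])" using s ax by (simp add: sorted_wrt_append)
  then have "lequiv (A @ [y, x]) ([y] @ A @ [x])" using bump_S2 yx by blast
  then have 2: "lequiv ([] @ (A @ [y, x]) @ Q) ([] @ ([y] @ A @ [x]) @ Q)" by (rule lequiv_ctx)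
  have h1: "lequiv (A @ [y] @ Q @ [x]) (A @ [y, x] @ Q)" using 1 by simp
  have h2: "lequiv (A @ [y, x] @ Q) ([y] @ A @ [x] @ Q)" using 2 by simp
  show ?thesis using rtranclp_trans[OF h1 h2] .
qed

lemma sorted_dec_sort: "sorted_wrt (\<ge>) P \<Longrightarrow> rev (sort P) = P"
proof -
  assume "sorted_wrt (\<ge>) P"
  then have "sorted (rev P)" by (simp add: sorted_wrt_rev)
  then have "sort P = rev P" by (intro properties_for_sort) simp_all
  then show ?thesis by simp
qed

lemma last_le_dec: "sorted_wrt (\<ge>) (P::nat list) \<Longrightarrow> p \<in> set P \<Longrightarrow> last P \<le> p"
proof (induction P)
  case Nil
  then show ?case by simp
next
  case (Cons a P)
  then show ?case by (cases P) auto
qed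

lemma sort_mset_eq: "mset xs = mset ys \<Longrightarrow> sort xs = sort (ys::nat list)"
  by (metis mset_sort properties_for_sort sorted_sort)

lemma process_aux:
  "length R = m \<Longrightarrow> sorted_wrt (\<ge>) P \<Longrightarrow> \<exists>k. ceq (P @ R) (rotate k (rev (sort (P @ R))))"
proof (induction m arbitrary: P R rule: less_induct)
  case (less m)
  note outerIH = less.IH
  have main: "\<forall>P R. length R = m \<longrightarrow> sum_list R = s \<longrightarrow> sorted_wrt (\<ge>) P \<longrightarrow>
     (\<exists>k. ceq (P @ R) (rotate k (rev (sort (P @ R)))))" for s
  proof (induction s rule: less_induct)
    case (less s)
    show ?case
    proof (intro allI impI)
      fix P R :: "nat list"
      assume lR: "length R = m" and sR: "sum_list R = s" and sP: "sorted_wrt (\<ge>) P"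
      show "\<exists>k. ceq (P @ R) (rotate k (rev (sort (P @ R))))"
      proof (cases R)
        case Nil
        then show ?thesis using sorted_dec_sort[OF sP] by (intro exI[of _ 0]) simp
      next
        case (Cons x R')
        show ?thesis
        proof (cases "P = [] \<or> x \<le> last P")
          case True
          have "sorted_wrt (\<ge>) (P @ [x])"
            using True sP last_le_dec[OF sP] by (auto simp: sorted_wrt_append intro: le_trans)
          moreover have lt: "length R' < m" using lR Cons by simp
          ultimately have "\<exists>k. ceq ((P @ [x]) @ R') (rotate k (rev (sort ((P @ [x]) @ R'))))"
            using outerIH[OF lt refl] by blast
          then show ?thesis using Cons by simp
        next
          case False
          then have Pne: "P \<noteq> []" and lx: "last P < x" by auto
          define A where "A = takeWhile (\<lambda>a. x \<le> a) P"
          define D where "D = dropWhile (\<lambda>a. x \<le> a) P"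
          have PAD: "P = A @ D" unfolding A_def D_def by simp
          have Dne: "D \<noteq> []"
          proof
            assume "D = []"
            then have "\<forall>a\<in>set P. x \<le> a" unfolding D_def by simp
            then show False using lx Pne last_in_set by fastforce
          qed
          define y where "y = hd D"
          define Q where "Q = tl D"
          have PAyQ: "P = A @ [y] @ Q" using PAD Dne unfolding y_def Q_def by simp
          have yx: "y < x" using hd_dropWhile[of "\<lambda>a. x \<le> a" P] Dne unfolding y_def D_def by simp
          have Ax: "\<forall>a\<in>set A. x \<le> a" unfolding A_def by (auto dest: set_takeWhileD)
          have sAyQ: "sorted_wrt (\<ge>) (A @ [y] @ Q)" using sP PAyQ by simp
          have b: "lequiv (A @ [y] @ Q @ [x]) ([y] @ A @ [x] @ Q)"
            by (rule bump[OF sAyQ Ax yx])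
          define P' where "P' = A @ [x] @ Q"
          have sP': "sorted_wrt (\<ge>) P'"
            using sAyQ Ax yx unfolding P'_def by (auto simp: sorted_wrt_append intro: le_trans)
          have lR2: "length (R' @ [y]) = m" using lR Cons by simp
          have sR2: "sum_list (R' @ [y]) < s" using sR Cons yx by simp
          obtain k where k: "ceq (P' @ R' @ [y]) (rotate k (rev (sort (P' @ R' @ [y]))))"
            using less.IH[OF sR2] lR2 sP' by blast
          have ms: "mset (P' @ R' @ [y]) = mset (P @ R)"
            unfolding P'_def using PAyQ Cons by (simp add: ac_simps)
          have e1: "ceq (P @ R) ([y] @ P' @ R')"
            using lequiv_ceq_ctx[OF b, of "[]" R'] PAyQ Cons unfolding P'_def by simp
          have e2: "[y] @ P' @ R' = rotate (length (P' @ R')) ((P' @ R') @ [y])"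
            by (metis rotate_append append.assoc)
          have e3: "ceq ([y] @ P' @ R') (rotate (length (P' @ R') + k) (rev (sort (P @ R))))"
            using ceq_rotate[OF k, of "length (P' @ R')"] e2 sort_mset_eq[OF ms]
            by (simp add: rotate_rotate)
          show ?thesis using ceq_trans[OF e1 e3] by blast
        qed
      qed
    qed
  qed
  then show ?case using less.prems by blast
qed


definition Kset :: "nat list \<Rightarrow> nat set" where
  "Kset W = {k. ceq W (rotate k W)}"

lemma K0: "0 \<in> Kset W" unfolding Kset_def by simp

lemma Kadd: "a \<in> Kset W \<Longrightarrow> b \<in> Kset W \<Longrightarrow> a + b \<in> Kset W"
  unfolding Kset_def
proof (simp)
  assume a: "ceq W (rotate a W)" and b: "ceq W (rotate b W)"
  have "ceq (rotate a W) (rotate a (rotate b W))" by (rule ceq_rotate[OF b])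
  then show "ceq W (rotate (a + b) W)" using a by (simp add: rotate_rotate ceq_trans)
qed

lemma Kmult: "a \<in> Kset W \<Longrightarrow> c * a \<in> Kset W"
  by (induction c) (auto simp: K0 Kadd)

lemma Ksub: "a \<in> Kset W \<Longrightarrow> b \<in> Kset W \<Longrightarrow> b \<le> a \<Longrightarrow> a - b \<in> Kset W"
  unfolding Kset_def
proof (simp)
  assume a: "ceq W (rotate a W)" and b: "ceq W (rotate b W)" and ba: "b \<le> a"
  have "ceq (rotate (a - b) W) (rotate (a - b) (rotate b W))" by (rule ceq_rotate[OF b])
  then have "ceq (rotate (a - b) W) (rotate a W)" using ba by (simp add: rotate_rotate)
  then show "ceq W (rotate (a - b) W)" using a ceq_sym ceq_trans by blast
qed

lemma Kgcd: "a \<in> Kset W \<Longrightarrow> b \<in> Kset W \<Longrightarrow> gcd a b \<in> Kset W"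
proof (cases "a = 0")
  case True
  assume "b \<in> Kset W" then show ?thesis using True by simp
next
  case False
  assume a: "a \<in> Kset W" and b: "b \<in> Kset W"
  obtain x y where xy: "a * x = b * y + gcd a b" using bezout_nat[OF False] by blast
  have ax: "a * x \<in> Kset W" using Kmult[OF a, of x] by (simp add: mult.commute)
  have "b * y \<in> Kset W" using Kmult[OF b, of y] by (simp add: mult.commute)
  from Ksub[OF ax this] have "a * x - b * y \<in> Kset W" using xy by simp
  then show ?thesis using xy by simp
qed

lemma KGcd: "finite A \<Longrightarrow> A \<subseteq> Kset W \<Longrightarrow> Gcd A \<in> Kset W"
proof (induction A rule: finite_induct)
  case empty
  then show ?case by (simp add: K0)
next
  case (insert a A)
  then show ?case by (simp add: Kgcd)
qed

lemma lift_cmove: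
  assumes m: "cmove u u'" and su: "set u \<subseteq> {..<l}"
  shows "ceq ([0..<l] @ u) ([0..<l] @ u')"
proof -
  obtain k where k: "lmove (rotate k u) (rotate k u')" using m unfolding cmove_def by blast
  have lu: "length u' = length u" using cmove_length[OF m] .
  define j where "j = k mod length u"
  define A where "A = take j u"
  define B where "B = drop j u"
  define A' where "A' = take j u'"
  define B' where "B' = drop j u'"
  define C where "C = [0..<l]"
  have u: "u = A @ B" unfolding A_def B_def by simp
  have u': "u' = A' @ B'" unfolding A'_def B'_def by simp
  have r: "rotate k u = B @ A" unfolding A_def B_def j_def by (simp add: rotate_drop_take)
  have r': "rotate k u' = B' @ A'" unfolding A'_def B'_def j_def using lu by (simp add: rotate_drop_take)
  have lB: "length B' = length B" unfolding B_def B'_def using lu by simp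
  have sA: "set A \<subseteq> {..<l}" using su u by auto
  have su': "set u' \<subseteq> {..<l}" using su cmove_mset[OF m] by (metis set_mset_mset)
  have sA': "set A' \<subseteq> {..<l}" using su' u' by auto
  have "lequiv (C @ A) (A @ C)" unfolding C_def by (rule col_central_list[OF sA])
  then have "lequiv ((C @ A) @ B) ((A @ C) @ B)" by (rule lequiv_appR)
  then have h1: "ceq (C @ u) (A @ C @ B)" using u lequiv_ceq by simp
  have "lmove (B @ A) (B' @ A')" using k r r' by simp
  then have "lmove ([] @ (B @ A) @ C) ([] @ (B' @ A') @ C)" by (rule lmove_ctx)
  then have "lmove (B @ A @ C) (B' @ A' @ C)" by simp
  then have "cmove (B @ A @ C) (B' @ A' @ C)" by (rule lmove_cmove)
  then have "ceq (B @ A @ C) (B' @ A' @ C)" by (rule r_into_rtranclp)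
  then have "ceq (rotate (length B) (B @ (A @ C))) (rotate (length B) (B' @ (A' @ C)))"
    using ceq_rotate by simp
  then have h2: "ceq (A @ C @ B) (A' @ C @ B')" using lB by (metis rotate_append append.assoc)
  have "lequiv (A' @ C) (C @ A')" unfolding C_def by (rule lequiv_sym[OF col_central_list[OF sA']])
  then have "lequiv ((A' @ C) @ B') ((C @ A') @ B')" by (rule lequiv_appR)
  then have h3: "ceq (A' @ C @ B') (C @ u')" using u' lequiv_ceq by simp
  show ?thesis using ceq_trans[OF ceq_trans[OF h1 h2] h3] unfolding C_def .
qed

lemma lift_ceq: "ceq u u' \<Longrightarrow> set u \<subseteq> {..<l} \<Longrightarrow> ceq ([0..<l] @ u) ([0..<l] @ u')"
proof (induction rule: rtranclp_induct)
  case base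
  then show ?case by simp
next
  case (step v w)
  have "set v \<subseteq> {..<l}" using step.prems ceq_mset[OF step.hyps(1)] by (metis set_mset_mset)
  then show ?case using step lift_cmove ceq_trans by blast
qed

lemma K_col: "set W \<subseteq> {..<l} \<Longrightarrow> l \<in> Kset ([0..<l] @ W)"
proof -
  assume s: "set W \<subseteq> {..<l}"
  have "lequiv ([0..<l] @ W) (W @ [0..<l])" by (rule col_central_list[OF s])
  then have "ceq ([0..<l] @ W) (rotate l ([0..<l] @ W))"
    using lequiv_ceq by (metis rotate_append length_upt minus_nat.diff_0)
  then show ?thesis unfolding Kset_def by simp
qed

lemma K_lift_mod:
  assumes k: "k \<in> Kset W" and s: "set W \<subseteq> {..<l}" and Wne: "W \<noteq> []"
  shows "k mod length W \<in> Kset ([0..<l] @ W)"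
proof -
  define j where "j = k mod length W"
  define A where "A = take j W"
  define B where "B = drop j W"
  define C where "C = [0..<l]"
  have W: "W = A @ B" unfolding A_def B_def by simp
  have r: "rotate k W = B @ A" unfolding A_def B_def j_def by (simp add: rotate_drop_take)
  have jl: "j < length W" unfolding j_def using Wne by simp
  have lA: "length A = j" unfolding A_def using jl by simp
  have h1: "ceq (C @ W) (C @ B @ A)" using lift_ceq[OF _ s] k r unfolding Kset_def C_def by simp
  have sB: "set B \<subseteq> {..<l}" using s W by auto
  have "lequiv (C @ B) (B @ C)" unfolding C_def by (rule col_central_list[OF sB])
  then have "lequiv ((C @ B) @ A) ((B @ C) @ A)" by (rule lequiv_appR)
  then have h2: "ceq (C @ B @ A) (B @ C @ A)" using lequiv_ceq by simp
  have h3: "B @ C @ A = rotate (l + j) (C @ W)"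
    using rotate_append[of "C @ A" B] W lA unfolding C_def by simp
  have "ceq (C @ W) (rotate l (C @ W))" using K_col[OF s] unfolding Kset_def C_def by simp
  then have "ceq (rotate j (C @ W)) (rotate j (rotate l (C @ W)))" by (rule ceq_rotate)
  then have h4: "ceq (rotate (l + j) (C @ W)) (rotate j (C @ W))"
    using ceq_sym by (simp add: rotate_rotate add.commute)
  have "ceq (C @ W) (rotate j (C @ W))"
    using ceq_trans[OF ceq_trans[OF h1 h2] h4[folded h3]] .
  then show ?thesis unfolding Kset_def C_def j_def by simp
qed

lemma K_lift:
  assumes k: "k \<in> Kset W" and s: "set W \<subseteq> {..<l}" and kl: "k \<le> length W"
  shows "k \<in> Kset ([0..<l] @ W)"
proof (cases "k < length W")
  case True
  then have "W \<noteq> []" by auto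
  then show ?thesis using K_lift_mod[OF k s] True by simp
next
  case False
  then have kW: "k = length W" using kl by simp
  have "length ([0..<l] @ W) \<in> Kset ([0..<l] @ W)" unfolding Kset_def by simp
  from Ksub[OF this K_col[OF s]] have "length ([0..<l] @ W) - l \<in> Kset ([0..<l] @ W)"
    by simp
  then show ?thesis using kW by simp
qed


lemma pos_prefix: "sorted_wrt (\<ge>) (lam::nat list) \<Longrightarrow> r < length lam \<Longrightarrow>
   (r < conj_part lam 1 \<longleftrightarrow> 0 < lam ! r)"
proof (induction lam arbitrary: r)
  case Nil
  then show ?case by simp
next
  case (Cons a lam)
  show ?case
  proof (cases "a = 0")
    case True
    then have "\<forall>x\<in>set lam. x = 0" using Cons.prems(1) by auto
    then have "filter (\<lambda>x. 1 \<le> x) lam = []" by (auto simp: filter_empty_conv)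
    moreover have "(a # lam) ! r = 0" using Cons.prems(2) True \<open>\<forall>x\<in>set lam. x = 0\<close>
      by (cases r) auto
    ultimately show ?thesis using True by (simp add: conj_part_def)
  next
    case False
    show ?thesis
    proof (cases r)
      case 0
      then show ?thesis using False by (simp add: conj_part_def)
    next
      case (Suc r')
      then have "r' < conj_part lam 1 \<longleftrightarrow> 0 < lam ! r'" using Cons by simp
      then show ?thesis using False Suc by (simp add: conj_part_def)
    qed
  qed
qed

lemma conj_shift: "1 \<le> j \<Longrightarrow> conj_part lam (Suc j) = conj_part (map (\<lambda>x. x - 1) lam) j"
  unfolding conj_part_def by (induction lam) auto

lemma conj_le_sum: "1 \<le> j \<Longrightarrow> conj_part lam j \<le> sum_list lam"
  unfolding conj_part_def by (induction lam) auto

lemma conj_mono: "i \<le> j \<Longrightarrow> conj_part lam j \<le> conj_part lam i"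
  unfolding conj_part_def by (induction lam) auto

lemma sum_map_minus: "sum_list (map (\<lambda>x. x - 1) lam) + conj_part lam 1 = sum_list lam"
  unfolding conj_part_def by (induction lam) auto

lemma conj_le_length: "conj_part lam j \<le> length lam"
  unfolding conj_part_def by simp

lemma W_exists:
  "sorted_wrt (\<ge>) lam \<Longrightarrow> \<exists>W. (\<forall>r. count (mset W) r = (if r < length lam then lam ! r else 0))
     \<and> set W \<subseteq> {..<conj_part lam 1} \<and> length W = sum_list lam
     \<and> (\<forall>j\<ge>1. conj_part lam j \<in> Kset W)"
proof (induction "sum_list lam" arbitrary: lam rule: less_induct)
  case less
  show ?case
  proof (cases "sum_list lam = 0")
    case True
    then have z: "\<forall>x\<in>set lam. x = 0" by simp
    have "\<forall>j\<ge>1. conj_part lam j = 0" using z unfolding conj_part_def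
      by (auto simp: filter_empty_conv)
    moreover have "\<forall>r<length lam. lam ! r = 0" using z by auto
    ultimately show ?thesis using True
      by (intro exI[of _ "[]"]) (auto simp: K0)
  next
    case False
    define l where "l = conj_part lam 1"
    define mu where "mu = map (\<lambda>x. x - 1) lam"
    have sm: "sum_list mu + l = sum_list lam" unfolding mu_def l_def by (rule sum_map_minus)
    have lpos: "0 < l"
    proof (rule ccontr)
      assume "\<not> 0 < l"
      then have "filter (\<lambda>x. 1 \<le> x) lam = []" unfolding l_def conj_part_def by simp
      then have "\<forall>x\<in>set lam. x = 0" by (auto simp: filter_empty_conv)
      then show False using False by simp
    qed
    have smu: "sorted_wrt (\<ge>) mu" unfolding mu_def using less.prems
      by (simp add: sorted_wrt_map) (rule sorted_wrt_mono_rel[of _ "\<lambda>x y. y \<le> x"], auto)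
    obtain W' where cW': "\<forall>r. count (mset W') r = (if r < length mu then mu ! r else 0)"
      and sW': "set W' \<subseteq> {..<conj_part mu 1}" and lW': "length W' = sum_list mu"
      and KW': "\<forall>j\<ge>1. conj_part mu j \<in> Kset W'"
      using less.hyps[of mu] sm lpos smu by auto
    have c21: "conj_part mu 1 \<le> l" unfolding l_def mu_def
      using conj_shift[of 1 lam] conj_mono[of 1 "Suc 1" lam] by (simp del: One_nat_def)
    have sW'l: "set W' \<subseteq> {..<l}" using sW' c21 by auto
    define W where "W = [0..<l] @ W'"
    have "\<forall>r. count (mset W) r = (if r < length lam then lam ! r else 0)"
    proof
      fix r
      have cr: "count (mset W) r = (if r < l then 1 else 0) + count (mset W') r"
        unfolding W_def by simp
      show "count (mset W) r = (if r < length lam then lam ! r else 0)"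
      proof (cases "r < length lam")
        case True
        have "r < l \<longleftrightarrow> 0 < lam ! r" unfolding l_def by (rule pos_prefix[OF less.prems True])
        then show ?thesis using cr cW' True unfolding mu_def by auto
      next
        case False
        have "l \<le> length lam" unfolding l_def by (rule conj_le_length)
        then show ?thesis using cr cW' False unfolding mu_def by auto
      qed
    qed
    moreover have "set W \<subseteq> {..<l}" unfolding W_def using sW'l by auto
    moreover have "length W = sum_list lam" unfolding W_def using lW' sm by simp
    moreover have "\<forall>j\<ge>1. conj_part lam j \<in> Kset W"
    proof (intro allI impI)
      fix j :: nat assume j1: "1 \<le> j"
      show "conj_part lam j \<in> Kset W"
      proof (cases "j = 1")
        case True
        then show ?thesis using K_col[OF sW'l] unfolding W_def l_def by simp
      next
        case False
        then obtain j' where j': "j = Suc j'" "1 \<le> j'" using j1 by (cases j) auto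
        have e: "conj_part lam j = conj_part mu j'" unfolding mu_def using conj_shift j' by simp
        have "conj_part mu j' \<in> Kset W'" using KW' j' by simp
        moreover have "conj_part mu j' \<le> length W'" using conj_le_sum[OF j'(2)] lW' by simp
        ultimately show ?thesis using K_lift[OF _ sW'l] e unfolding W_def by simp
      qed
    qed
    ultimately show ?thesis unfolding l_def by blast
  qed
qed


definition tab_of :: "nat \<Rightarrow> nat list \<Rightarrow> nat list \<Rightarrow> nat set list" where
  "tab_of n lam w = map (\<lambda>r. {i. i < n \<and> w ! i = r}) [0..<length lam]"

definition wordsL :: "nat \<Rightarrow> nat list \<Rightarrow> nat list set" where
  "wordsL n lam = {w. length w = n \<and> (\<forall>r. count (mset w) r = (if r < length lam then lam ! r else 0))}"

lemma card_idx: "card {i. i < length w \<and> w ! i = r} = count (mset w) r"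
  by (simp add: count_mset count_list_eq_length_filter length_filter_conv_card eq_commute)

lemma wordsL_letter: "w \<in> wordsL n lam \<Longrightarrow> i < n \<Longrightarrow> w ! i < length lam"
proof -
  assume w: "w \<in> wordsL n lam" and i: "i < n"
  then have "w ! i \<in> set w" unfolding wordsL_def by auto
  then have "count (mset w) (w ! i) > 0" by simp
  then show ?thesis using w unfolding wordsL_def by (auto split: if_splits)
qed

lemma tab_of_nth: "r < length lam \<Longrightarrow> tab_of n lam w ! r = {i. i < n \<and> w ! i = r}"
  unfolding tab_of_def by simp

lemma tab_of_in: "w \<in> wordsL n lam \<Longrightarrow> tab_of n lam w \<in> tabloids n lam"
proof -
  assume w: "w \<in> wordsL n lam"
  have ln: "length w = n" using w unfolding wordsL_def by simp
  have "\<forall>r < length lam. card (tab_of n lam w ! r) = lam ! r"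
  proof (intro allI impI)
    fix r assume r: "r < length lam"
    have "card (tab_of n lam w ! r) = count (mset w) r"
      using card_idx[of w r] ln tab_of_nth[OF r] by simp
    then show "card (tab_of n lam w ! r) = lam ! r" using w r unfolding wordsL_def by simp
  qed
  moreover have "\<forall>r < length lam. \<forall>s < length lam. r \<noteq> s \<longrightarrow> tab_of n lam w ! r \<inter> tab_of n lam w ! s = {}"
    by (auto simp: tab_of_nth)
  moreover have "\<Union> (set (tab_of n lam w)) = {0..<n}"
  proof
    show "\<Union> (set (tab_of n lam w)) \<subseteq> {0..<n}" unfolding tab_of_def by auto
    show "{0..<n} \<subseteq> \<Union> (set (tab_of n lam w))"
    proof
      fix i assume "i \<in> {0..<n}"
      then have i: "i < n" by simp
      have "w ! i < length lam" using wordsL_letter[OF w i] .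
      then show "i \<in> \<Union> (set (tab_of n lam w))" unfolding tab_of_def using i by auto
    qed
  qed
  ultimately show ?thesis unfolding tabloids_def tab_of_def by simp
qed

lemma tabloid_word:
  assumes T: "T \<in> tabloids n lam"
  shows "\<exists>w \<in> wordsL n lam. tab_of n lam w = T"
proof -
  have lT: "length T = length lam" and cT: "\<forall>r < length lam. card (T ! r) = lam ! r"
    and dT: "\<forall>r < length lam. \<forall>s < length lam. r \<noteq> s \<longrightarrow> T ! r \<inter> T ! s = {}"
    and uT: "\<Union> (set T) = {0..<n}" using T unfolding tabloids_def by auto
  have ex: "\<exists>r. r < length lam \<and> i \<in> T ! r" if "i < n" for i
  proof -
    have "i \<in> \<Union> (set T)" using uT that by simp
    then obtain A where "A \<in> set T" "i \<in> A" by blast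
    then show ?thesis using lT by (metis in_set_conv_nth)
  qed
  have uniq: "r = s" if "r < length lam" "s < length lam" "i \<in> T ! r" "i \<in> T ! s" for r s i
    using dT that by blast
  have sub: "T ! r \<subseteq> {0..<n}" if "r < length lam" for r
    using uT that lT by (metis Union_upper nth_mem)
  define w where "w = map (\<lambda>i. THE r. r < length lam \<and> i \<in> T ! r) [0..<n]"
  have lw: "length w = n" unfolding w_def by simp
  have wi: "w ! i < length lam \<and> i \<in> T ! (w ! i)" if "i < n" for i
  proof -
    have "\<exists>!r. r < length lam \<and> i \<in> T ! r" using ex[OF that] uniq by blast
    then have "(THE r. r < length lam \<and> i \<in> T ! r) < length lam \<and> i \<in> T ! (THE r. r < length lam \<and> i \<in> T ! r)"
      by (rule theI')
    then show ?thesis unfolding w_def using that by simp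
  qed
  have tw: "tab_of n lam w ! r = T ! r" if r: "r < length lam" for r
  proof
    show "tab_of n lam w ! r \<subseteq> T ! r" using wi by (auto simp: tab_of_nth[OF r])
    show "T ! r \<subseteq> tab_of n lam w ! r"
    proof
      fix i assume i: "i \<in> T ! r"
      then have "i < n" using sub[OF r] by auto
      then have "w ! i = r" using wi uniq i r by blast
      then show "i \<in> tab_of n lam w ! r" using \<open>i < n\<close> by (simp add: tab_of_nth[OF r])
    qed
  qed
  have "length (tab_of n lam w) = length T" by (simp add: tab_of_def lT)
  then have teq: "tab_of n lam w = T"
    by (rule nth_equalityI) (metis tw length_map length_upt minus_nat.diff_0 tab_of_def)
  have "\<forall>r. count (mset w) r = (if r < length lam then lam ! r else 0)"
  proof
    fix r
    show "count (mset w) r = (if r < length lam then lam ! r else 0)"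
    proof (cases "r < length lam")
      case True
      have "count (mset w) r = card (tab_of n lam w ! r)"
        using card_idx[of w r] lw tab_of_nth[OF True] by simp
      then show ?thesis using teq cT True by simp
    next
      case False
      have "r \<notin> set w" using wi False lw by (auto simp: in_set_conv_nth)
      then show ?thesis using False by simp
    qed
  qed
  then show ?thesis using lw teq unfolding wordsL_def by blast
qed

lemma tau_tab:
  assumes w: "w \<in> wordsL n lam"
  shows "tau n (tab_of n lam w) = {i \<in> {0..<n}. w ! i < w ! res_succ n i}"
proof -
  have ln: "length w = n" using w unfolding wordsL_def by simp
  have sh: "strictly_higher (tab_of n lam w) a b \<longleftrightarrow> w ! a < w ! b" if ab: "a < n" "b < n" for a b
  proof
    assume "strictly_higher (tab_of n lam w) a b"
    then obtain r s where "r < s" "s < length lam" "a \<in> tab_of n lam w ! r" "b \<in> tab_of n lam w ! s"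
      unfolding strictly_higher_def by (auto simp: tab_of_def)
    then show "w ! a < w ! b" by (simp add: tab_of_nth)
  next
    assume lt: "w ! a < w ! b"
    have "w ! b < length lam" using wordsL_letter[OF w ab(2)] .
    then show "strictly_higher (tab_of n lam w) a b" unfolding strictly_higher_def
      using lt ab by (intro exI[of _ "w ! a"] exI[of _ "w ! b"]) (simp add: tab_of_def)
  qed
  have rs: "res_succ n i < n" if "i < n" for i unfolding res_succ_def using that by simp
  show ?thesis unfolding tau_def using sh rs by auto
qed


lemma swap_el_inv[simp]: "swap_el a b (swap_el a b x) = x"
  unfolding swap_el_def by auto

lemma swap_el_lt: "a < n \<Longrightarrow> b < n \<Longrightarrow> x < n \<Longrightarrow> swap_el a b x < n"
  unfolding swap_el_def by auto

lemma exchange_tab: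
  assumes w: "w \<in> wordsL n lam" and lw': "length w' = n" and b: "\<beta> < n"
    and sw: "\<forall>t<n. w' ! t = w ! swap_el \<beta> (res_succ n \<beta>) t"
  shows "tab_of n lam w' = exchange n \<beta> (tab_of n lam w)"
proof -
  define \<gamma> where "\<gamma> = res_succ n \<beta>"
  have g: "\<gamma> < n" unfolding \<gamma>_def res_succ_def using b by simp
  have "swap_el \<beta> \<gamma> ` {i. i < n \<and> w ! i = r} = {i. i < n \<and> w' ! i = r}" for r
  proof
    show "swap_el \<beta> \<gamma> ` {i. i < n \<and> w ! i = r} \<subseteq> {i. i < n \<and> w' ! i = r}"
      using sw swap_el_lt[OF b g] unfolding \<gamma>_def by auto
    show "{i. i < n \<and> w' ! i = r} \<subseteq> swap_el \<beta> \<gamma> ` {i. i < n \<and> w ! i = r}"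
    proof
      fix i assume i: "i \<in> {i. i < n \<and> w' ! i = r}"
      then have "swap_el \<beta> \<gamma> i \<in> {i. i < n \<and> w ! i = r}"
        using sw swap_el_lt[OF b g] unfolding \<gamma>_def by auto
      then show "i \<in> swap_el \<beta> \<gamma> ` {i. i < n \<and> w ! i = r}"
        by (metis image_eqI swap_el_inv)
    qed
  qed
  then show ?thesis unfolding exchange_def tab_of_def \<gamma>_def by simp
qed

definition pos :: "nat \<Rightarrow> nat \<Rightarrow> nat \<Rightarrow> nat" where "pos n k t = (k + t) mod n"

lemma mod_add_split: "t < (n::nat) \<Longrightarrow> (k + t) mod n = (if k mod n + t < n then k mod n + t else k mod n + t - n)"
proof -
  assume t: "t < n"
  have a: "k mod n < n" using t by simp
  have "(k + t) mod n = (k mod n + t) mod n" by (simp add: mod_add_left_eq)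
  also have "\<dots> = (if k mod n + t < n then k mod n + t else k mod n + t - n)"
  proof (cases "k mod n + t < n")
    case True then show ?thesis by simp
  next
    case False
    then have "k mod n + t - n < n" using a t by linarith
    moreover have "k mod n + t = (k mod n + t - n) + n" using False by simp
    ultimately show ?thesis using False by (metis mod_add_self2 mod_less)
  qed
  finally show ?thesis .
qed

lemma pos_inj: "pos n k t1 = pos n k t2 \<Longrightarrow> t1 < n \<Longrightarrow> t2 < n \<Longrightarrow> t1 = t2"
  unfolding pos_def
  using mod_add_split[of t1 n k] mod_add_split[of t2 n k] mod_less_divisor[of n k] by (auto split: if_splits)

lemma pos_surj: "0 < n \<Longrightarrow> t < n \<Longrightarrow> \<exists>t'<n. pos n k t' = t"
proof -
  assume n: "0 < n" "t < n"
  have "(k + (t + n - k mod n)) mod n = t" using n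
    by (smt (verit, ccfv_threshold) add_leD2 le_antisym le_eq_less_or_eq
      linordered_semidom_class.add_diff_inverse mod_add_cong mod_add_self2
      mod_less mod_less_divisor verit_comp_simplify1(1))
  then have "pos n k ((t + n - k mod n) mod n) = t" unfolding pos_def by (metis mod_add_right_eq)
  moreover have "(t + n - k mod n) mod n < n" using n by simp
  ultimately show ?thesis by blast
qed

lemma pos_lt: "0 < n \<Longrightarrow> pos n k t < n" unfolding pos_def by simp

lemma pos_succ: "res_succ n (pos n k t) = pos n k (Suc t)"
  unfolding pos_def res_succ_def by (metis Suc_eq_plus1 add.assoc mod_add_left_eq add_Suc_right)

lemma nth_rot: "length v = n \<Longrightarrow> t < n \<Longrightarrow> rotate k v ! t = v ! pos n k t"
  unfolding pos_def by (simp add: nth_rotate)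

lemma tau_pos:
  assumes w: "w \<in> wordsL n lam" and t: "Suc t < n"
  shows "pos n k t \<in> tau n (tab_of n lam w) \<longleftrightarrow> rotate k w ! t < rotate k w ! Suc t"
proof -
  have lw: "length w = n" using w unfolding wordsL_def by simp
  have n: "0 < n" using t by simp
  show ?thesis using tau_tab[OF w] pos_lt[OF n] pos_succ nth_rot[OF lw] t by simp
qed

lemma core_edge:
  assumes w: "w \<in> wordsL n lam" and w': "w' \<in> wordsL n lam"
    and R: "rotate k w' = (rotate k w)[u := rotate k w ! Suc u, Suc u := rotate k w ! u]"
    and u: "Suc u < n" and ne: "rotate k w ! u \<noteq> rotate k w ! Suc u"
    and C: "(0 < u \<and> min (rotate k w ! u) (rotate k w ! Suc u) \<le> rotate k w ! (u - 1)
               \<and> rotate k w ! (u - 1) < max (rotate k w ! u) (rotate k w ! Suc u))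
          \<or> (Suc (Suc u) < n \<and> min (rotate k w ! u) (rotate k w ! Suc u) < rotate k w ! Suc (Suc u)
               \<and> rotate k w ! Suc (Suc u) \<le> max (rotate k w ! u) (rotate k w ! Suc u))"
  shows "(tab_of n lam w, tab_of n lam w') \<in> knuth_edges n lam"
proof -
  have lw: "length w = n" using w unfolding wordsL_def by simp
  have lw': "length w' = n" using w' unfolding wordsL_def by simp
  have n: "0 < n" using u by simp
  define Rw where "Rw = rotate k w"
  define Rw' where "Rw' = rotate k w'"
  have lR: "length Rw = n" unfolding Rw_def using lw by simp
  define x where "x = Rw ! u"
  define y where "y = Rw ! Suc u"
  have R': "Rw' = Rw[u := y, Suc u := x]" using R unfolding Rw_def Rw'_def x_def y_def by simp
  have R'u: "Rw' ! u = y" using R' lR u by simp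
  have R'su: "Rw' ! Suc u = x" using R' lR u by simp
  have R'o: "Rw' ! t = Rw ! t" if "t \<noteq> u" "t \<noteq> Suc u" for t using R' that by simp
  define \<beta> where "\<beta> = pos n k u"
  define \<gamma> where "\<gamma> = pos n k (Suc u)"
  have g: "\<gamma> = res_succ n \<beta>" unfolding \<beta>_def \<gamma>_def by (simp add: pos_succ)
  have bn: "\<beta> < n" unfolding \<beta>_def using pos_lt[OF n] .
  have bg: "\<beta> \<noteq> \<gamma>" unfolding \<beta>_def \<gamma>_def using pos_inj u by fastforce
  have sw: "\<forall>t<n. w' ! t = w ! swap_el \<beta> (res_succ n \<beta>) t"
  proof (intro allI impI)
    fix t assume t: "t < n"
    obtain t' where t': "t' < n" "pos n k t' = t" using pos_surj[OF n t] by blast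
    have e1: "w' ! t = Rw' ! t'" unfolding Rw'_def using nth_rot[OF lw' t'(1)] t'(2) by simp
    have e2: "w ! p = Rw ! p'" if "p' < n" "pos n k p' = p" for p p'
      unfolding Rw_def using nth_rot[OF lw that(1)] that(2) by simp
    show "w' ! t = w ! swap_el \<beta> (res_succ n \<beta>) t"
    proof (cases "t' = u")
      case True
      then have "t = \<beta>" using t' unfolding \<beta>_def by simp
      then show ?thesis using e1 R'u True e2[OF u refl] unfolding g[symmetric] y_def \<gamma>_def
        by (simp add: swap_el_def)
    next
      case f1: False
      show ?thesis
      proof (cases "t' = Suc u")
        case True
        then have "t = \<gamma>" using t' unfolding \<gamma>_def by simp
        have "w ! \<beta> = Rw ! u" using e2[OF _ refl, of u] u unfolding \<beta>_def by simp
        then show ?thesis using e1 R'su True \<open>t = \<gamma>\<close> bg unfolding g[symmetric] x_def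
          by (simp add: swap_el_def)
      next
        case False
        have "t \<noteq> \<beta>" using f1 t' pos_inj u unfolding \<beta>_def by fastforce
        moreover have "t \<noteq> \<gamma>" using False t' pos_inj u unfolding \<gamma>_def by fastforce
        ultimately show ?thesis using e1 R'o[OF f1 False] e2[OF t'] unfolding g[symmetric]
          by (simp add: swap_el_def)
      qed
    qed
  qed
  have ex: "tab_of n lam w' = exchange n \<beta> (tab_of n lam w)"
    by (rule exchange_tab[OF w lw' bn sw])
  let ?T = "tau n (tab_of n lam w)"
  let ?T' = "tau n (tab_of n lam w')"
  have tp: "pos n k t \<in> ?T \<longleftrightarrow> Rw ! t < Rw ! Suc t" if "Suc t < n" for t
    using tau_pos[OF w that] unfolding Rw_def .
  have tp': "pos n k t \<in> ?T' \<longleftrightarrow> Rw' ! t < Rw' ! Suc t" if "Suc t < n" for t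
    using tau_pos[OF w' that] unfolding Rw'_def .
  have bT: "\<beta> \<in> ?T \<longleftrightarrow> x < y" using tp[OF u] unfolding \<beta>_def x_def y_def .
  have bT': "\<beta> \<in> ?T' \<longleftrightarrow> y < x" using tp'[OF u] R'u R'su unfolding \<beta>_def by simp
  have inc: "\<not> ?T \<subseteq> ?T' \<and> \<not> ?T' \<subseteq> ?T"
  proof (cases "0 < u \<and> min x y \<le> Rw ! (u - 1) \<and> Rw ! (u - 1) < max x y")
    case True
    define a where "a = Rw ! (u - 1)"
    have su: "Suc (u - 1) = u" using True by simp
    have "Suc (u - 1) < n" using su u by simp
    have aT: "pos n k (u - 1) \<in> ?T \<longleftrightarrow> a < x" using tp[OF \<open>Suc (u - 1) < n\<close>] su
      unfolding a_def x_def by simp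
    have "u - 1 \<noteq> u" "u - 1 \<noteq> Suc u" using True by auto
    then have "Rw' ! (u - 1) = Rw ! (u - 1)" by (rule R'o)
    then have aT': "pos n k (u - 1) \<in> ?T' \<longleftrightarrow> a < y"
      using tp'[OF \<open>Suc (u - 1) < n\<close>] su R'u unfolding a_def by simp
    show ?thesis using True aT aT' bT bT' ne unfolding a_def x_def[symmetric] y_def[symmetric] Rw_def[symmetric]
      by (cases "x < y") (auto simp: min_def max_def split: if_splits)
  next
    case False
    then have C2: "Suc (Suc u) < n \<and> min x y < Rw ! Suc (Suc u) \<and> Rw ! Suc (Suc u) \<le> max x y"
      using C unfolding Rw_def x_def y_def by blast
    define d where "d = Rw ! Suc (Suc u)"
    have gT: "\<gamma> \<in> ?T \<longleftrightarrow> y < d" using tp[of "Suc u"] C2 unfolding \<gamma>_def d_def y_def by simp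
    have gT': "\<gamma> \<in> ?T' \<longleftrightarrow> x < d" using tp'[of "Suc u"] C2 R'su R'o[of "Suc (Suc u)"]
      unfolding \<gamma>_def d_def by simp
    show ?thesis using C2 gT gT' bT bT' ne unfolding d_def[symmetric] x_def[symmetric] y_def[symmetric] Rw_def[symmetric]
      by (cases "x < y") (auto simp: min_def max_def split: if_splits)
  qed
  have "knuth_move n (tab_of n lam w) (tab_of n lam w')"
    unfolding knuth_move_def using bn ex inc by auto
  then show ?thesis unfolding knuth_edges_def using tab_of_in[OF w] tab_of_in[OF w'] by auto
qed


lemma cmove_words: "w \<in> wordsL n lam \<Longrightarrow> cmove w w' \<Longrightarrow> w' \<in> wordsL n lam"
  unfolding wordsL_def using cmove_length cmove_mset by auto

lemma cmove_edge:
  assumes w: "w \<in> wordsL n lam" and m: "cmove w w'"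
  shows "(tab_of n lam w, tab_of n lam w') \<in> knuth_edges n lam"
proof -
  have w': "w' \<in> wordsL n lam" by (rule cmove_words[OF w m])
  have lw: "length w = n" using w unfolding wordsL_def by simp
  obtain k where k: "lmove (rotate k w) (rotate k w')" using m unfolding cmove_def by blast
  from k show ?thesis unfolding lmove_def
  proof (elim disjE exE conjE)
    fix p q a b c
    assume r: "rotate k w = p @ [a, b, c] @ q" and r': "rotate k w' = p @ [a, c, b] @ q"
      and c1: "min b c \<le> a" and c2: "a < max b c"
    define u where "u = Suc (length p)"
    have ln: "length (rotate k w) = n" using lw by simp
    have Ru: "rotate k w ! u = b" and Rsu: "rotate k w ! Suc u = c" and Rp: "rotate k w ! (u - 1) = a"
      unfolding u_def r by (simp_all add: nth_append)
    have un: "Suc u < n" using ln unfolding r u_def by simp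
    have "rotate k w' = (rotate k w)[u := rotate k w ! Suc u, Suc u := rotate k w ! u]"
      unfolding Ru Rsu unfolding r r' u_def by (simp add: list_update_append)
    moreover have "rotate k w ! u \<noteq> rotate k w ! Suc u" using Ru Rsu c1 c2 by auto
    moreover have "0 < u" unfolding u_def by simp
    ultimately show ?thesis using core_edge[where k=k, OF w w' _ un] Ru Rsu Rp c1 c2 by simp
  next
    fix p q b c d
    assume r: "rotate k w = p @ [b, c, d] @ q" and r': "rotate k w' = p @ [c, b, d] @ q"
      and c1: "min b c < d" and c2: "d \<le> max b c"
    define u where "u = length p"
    have ln: "length (rotate k w) = n" using lw by simp
    have Ru: "rotate k w ! u = b" and Rsu: "rotate k w ! Suc u = c" and Rp: "rotate k w ! Suc (Suc u) = d"
      unfolding u_def r by (simp_all add: nth_append)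
    have un: "Suc u < n" and un2: "Suc (Suc u) < n" using ln unfolding r u_def by simp_all
    have "rotate k w' = (rotate k w)[u := rotate k w ! Suc u, Suc u := rotate k w ! u]"
      unfolding Ru Rsu unfolding r r' u_def by (simp add: list_update_append)
    moreover have "rotate k w ! u \<noteq> rotate k w ! Suc u" using Ru Rsu c1 c2 by auto
    ultimately show ?thesis using core_edge[where k=k, OF w w' _ un] Ru Rsu Rp c1 c2 un2 by simp
  qed
qed

lemma ceq_edges:
  assumes "ceq w w'" and "w \<in> wordsL n lam"
  shows "(tab_of n lam w, tab_of n lam w') \<in> (knuth_edges n lam)\<^sup>*"
  using assms
proof (induction rule: rtranclp_induct)
  case base
  then show ?case by simp
next
  case (step v v')
  have "v \<in> wordsL n lam"
    using step.prems ceq_mset[OF step.hyps(1)] ceq_length[OF step.hyps(1)] unfolding wordsL_def by simp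
  then show ?case using step cmove_edge by (meson rtrancl.rtrancl_into_rtrancl)
qed


lemma knuth_edges_sym: "sym (knuth_edges n lam)"
  unfolding sym_def knuth_edges_def by auto

lemma reach_rot:
  assumes w: "w \<in> wordsL n lam" and W: "W \<in> wordsL n lam" and d: "d \<in> Kset W" and dpos: "0 < d"
  shows "\<exists>m<d. ceq w (rotate m W)"
proof -
  have lw: "length w = n" and lW: "length W = n" using w W unfolding wordsL_def by auto
  have ms: "mset w = mset W" using w W unfolding wordsL_def by (simp add: multiset_eq_iff)
  obtain k where k: "ceq w (rotate k (rev (sort w)))" using process_aux[of w "length w" "[]"] by auto
  obtain k' where k': "ceq W (rotate k' (rev (sort W)))" using process_aux[of W "length W" "[]"] by auto
  define S where "S = rev (sort W)"
  have lS: "length S = n" unfolding S_def using lW by simp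
  have sw: "sort w = sort W" using sort_mset_eq[OF ms] .
  define j where "j = n - k' mod n"
  have "ceq (rotate j W) (rotate j (rotate k' S))" using ceq_rotate[OF k'] unfolding S_def .
  moreover have "rotate j (rotate k' S) = S"
  proof (cases "n = 0")
    case True then show ?thesis using lS by simp
  next
    case False
    have "(j + k') mod n = 0" unfolding j_def using False
      by (metis add.commute le_add_diff_inverse mod_add_left_eq mod_le_divisor mod_self neq0_conv)
    then show ?thesis using lS by (simp add: rotate_rotate)
  qed
  ultimately have "ceq S (rotate j W)" using ceq_sym by simp
  then have "ceq (rotate k S) (rotate (k + j) W)" using ceq_rotate by (fastforce simp: rotate_rotate)
  then have c1: "ceq w (rotate (k + j) W)" using k sw unfolding S_def using ceq_trans by simp
  define M where "M = k + j"
  have "(M div d) * d \<in> Kset W" using Kmult[OF d] .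
  then have "ceq W (rotate ((M div d) * d) W)" unfolding Kset_def by simp
  then have "ceq (rotate (M mod d) W) (rotate (M mod d) (rotate ((M div d) * d) W))" by (rule ceq_rotate)
  then have "ceq (rotate M W) (rotate (M mod d) W)"
    using ceq_sym by (simp add: rotate_rotate add.commute)
  then have "ceq w (rotate (M mod d) W)" using c1 ceq_trans unfolding M_def by blast
  moreover have "M mod d < d" using dpos by simp
  ultimately show ?thesis by blast
qed

theorem proposition8p2:
  fixes n :: nat and lam :: "nat list"
  assumes "n \<ge> 1" and "is_partition lam n"
  shows "num_components n lam \<le> d_lam lam"
proof -
  have slam: "sorted_wrt (\<ge>) lam" and z: "0 \<notin> set lam" and sl: "sum_list lam = n"
    using assms(2) unfolding is_partition_def by auto
  obtain W where cW: "\<forall>r. count (mset W) r = (if r < length lam then lam ! r else 0)"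
    and lW: "length W = sum_list lam" and KW: "\<forall>j\<ge>1. conj_part lam j \<in> Kset W"
    using W_exists[OF slam] by blast
  have Ww: "W \<in> wordsL n lam" unfolding wordsL_def using cW lW sl by simp
  define d where "d = d_lam lam"
  define A where "A = conj_part lam ` {1..sum_list lam}"
  have dA: "d = Gcd A" unfolding d_def d_lam_def A_def ..
  have "A \<subseteq> Kset W" unfolding A_def using KW by auto
  then have dK: "d \<in> Kset W" using KGcd[of A W] dA unfolding A_def by simp
  have c1: "conj_part lam 1 = length lam" unfolding conj_part_def using z
    by (metis (no_types, lifting) filter_True less_one not_le)
  have lpos: "0 < length lam" using sl assms(1) by (cases lam) auto
  have "conj_part lam 1 \<in> A" unfolding A_def using sl assms(1) by auto
  then have "Gcd A dvd conj_part lam 1" by (rule Gcd_dvd)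
  then have dpos: "0 < d" using dA c1 lpos by (metis gr0I dvd_0_left_iff less_nat_zero_code)
  define E where "E = knuth_edges n lam"
  have symE: "sym (E\<^sup>*)" unfolding E_def using knuth_edges_sym sym_rtrancl by blast
  have cls: "E\<^sup>* `` {T} = E\<^sup>* `` {T'}" if "(T, T') \<in> E\<^sup>*" for T T'
  proof -
    have "(T', T) \<in> E\<^sup>*" using symE that unfolding sym_def by blast
    then show ?thesis using that by (auto intro: rtrancl_trans)
  qed
  have sub: "tabloids n lam // E\<^sup>* \<subseteq> (\<lambda>m. E\<^sup>* `` {tab_of n lam (rotate m W)}) ` {0..<d}"
  proof
    fix X assume "X \<in> tabloids n lam // E\<^sup>*"
    then obtain T where T: "T \<in> tabloids n lam" and X: "X = E\<^sup>* `` {T}" unfolding quotient_def by blast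
    obtain w where w: "w \<in> wordsL n lam" and wT: "tab_of n lam w = T" using tabloid_word[OF T] by blast
    obtain m where m: "m < d" and c: "ceq w (rotate m W)" using reach_rot[OF w Ww dK dpos] by blast
    have "(T, tab_of n lam (rotate m W)) \<in> E\<^sup>*" using ceq_edges[OF c w] wT unfolding E_def by simp
    then have "X = E\<^sup>* `` {tab_of n lam (rotate m W)}" using cls X by simp
    then show "X \<in> (\<lambda>m. E\<^sup>* `` {tab_of n lam (rotate m W)}) ` {0..<d}" using m by auto
  qed
  have "card (tabloids n lam // E\<^sup>*) \<le> card ((\<lambda>m. E\<^sup>* `` {tab_of n lam (rotate m W)}) ` {0..<d})"
    by (rule card_mono[OF _ sub]) simp
  also have "\<dots> \<le> card {0..<d}" by (rule card_image_le) simp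
  finally show ?thesis unfolding num_components_def E_def d_def by simp
qed

end
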